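(* Let $(V,\mu)$ be an infinite, connected, locally finite, non-parabolic weighted graph, $q>1$, $\sigma\in\ell^+(V)$, $\sigma\not\equiv0$. Suppose $-\Delta u\ge\sigma u^q$ in $V$ admits a positive solution. Then for every $o\in V$ with $\sigma(o)>0$, $$\sum_{y\in V}g(o,y)^q\nu(y)<\infty,$$ and there exist $r_0>0$ and $C>0$ such that for all $r>r_0$, $$\sup_{x\in V}\sum_{y\in V:\ g(o,y)>r^{-1}} g(x,y)\nu(y)\le C r^{q-1}.$$ Conversely, if $g$ satisfies the (3G) inequality and both displayed conditions hold for some $o\in V$, then $-\Delta u\ge\sigma u^q$ in $V$ (equivalently $u\ge G(\sigma u^q)$ in $V$) admits a positive solution.
   Context: Weighted graph: $\mu_{xy}=\mu_{yx}\ge0$, $\mu_{xy}>0$ iff $x\sim y$, $\mu(x)=\sum_{y\sim x}\mu_{xy}$; Laplacian $\Delta u(x)=\frac1{\mu(x)}\sum_{y\sim x}\mu_{xy}(u(y)-u(x))$. The random walk has $P(x,y)=\mu_{xy}/\mu(x)$, $P_n(x,y)=\mathbb P_x[X_n=y]$; the Green function is $g(x,y)=\sum_{n\ge0}P_n(x,y)/\mu(y)$ (finite when the graph is non-parabolic, i.e. not every nonnegative superharmonic function is constant), and $Gf(x)=\sum_y g(x,y)f(y)\mu(y)$. $\nu(x)=\sigma(x)\mu(x)$. A positive solution means $u(x)>0$ for all $x$. The (3G) inequality: there is $\kappa\ge1$ with $\frac1{g(x,y)}\le\kappa\big(\frac1{g(x,z)}+\frac1{g(z,y)}\big)$ for all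 $x,y,z\in V$. *)

theory Defs
  imports "HOL-Analysis.Analysis"
begin

definition weighted_graph :: "('a \<Rightarrow> 'a \<Rightarrow> real) \<Rightarrow> bool" where
  "weighted_graph mu \<longleftrightarrow> (\<forall>x y. mu x y = mu y x \<and> mu x y \<ge> 0)"

definition adj :: "('a \<Rightarrow> 'a \<Rightarrow> real) \<Rightarrow> 'a \<Rightarrow> 'a \<Rightarrow> bool" where
  "adj mu x y \<longleftrightarrow> mu x y > 0"

definition nbrs :: "('a \<Rightarrow> 'a \<Rightarrow> real) \<Rightarrow> 'a \<Rightarrow> 'a set" where
  "nbrs mu x = {y. adj mu x y}"

definition locally_finite :: "('a \<Rightarrow> 'a \<Rightarrow> real) \<Rightarrow> bool" where
  "locally_finite mu \<longleftrightarrow> (\<forall>x. finite (nbrs mu x))"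

definition connected_graph :: "('a \<Rightarrow> 'a \<Rightarrow> real) \<Rightarrow> bool" where
  "connected_graph mu \<longleftrightarrow> (\<forall>x y. (adj mu)\<^sup>*\<^sup>* x y)"

definition vmeas :: "('a \<Rightarrow> 'a \<Rightarrow> real) \<Rightarrow> 'a \<Rightarrow> real" where
  "vmeas mu x = (\<Sum>y\<in>nbrs mu x. mu x y)"

definition laplacian :: "('a \<Rightarrow> 'a \<Rightarrow> real) \<Rightarrow> ('a \<Rightarrow> real) \<Rightarrow> 'a \<Rightarrow> real" where
  "laplacian mu u x = (1 / vmeas mu x) * (\<Sum>y\<in>nbrs mu x. mu x y * (u y - u x))"

definition non_parabolic :: "('a \<Rightarrow> 'a \<Rightarrow> real) \<Rightarrow> bool" where
  "non_parabolic mu \<longleftrightarrow>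
     \<not> (\<forall>u::'a \<Rightarrow> real. (\<forall>x. u x \<ge> 0) \<and> (\<forall>x. laplacian mu u x \<le> 0) \<longrightarrow> (\<exists>c. \<forall>x. u x = c))"

definition trans_prob :: "('a \<Rightarrow> 'a \<Rightarrow> real) \<Rightarrow> 'a \<Rightarrow> 'a \<Rightarrow> real" where
  "trans_prob mu x y = mu x y / vmeas mu x"

fun nstep :: "('a \<Rightarrow> 'a \<Rightarrow> real) \<Rightarrow> nat \<Rightarrow> 'a \<Rightarrow> 'a \<Rightarrow> real" where
  "nstep mu 0 x y = (if x = y then 1 else 0)"
| "nstep mu (Suc n) x y = (\<Sum>z\<in>nbrs mu x. trans_prob mu x z * nstep mu n z y)"

definition green :: "('a \<Rightarrow> 'a \<Rightarrow> real) \<Rightarrow> 'a \<Rightarrow> 'a \<Rightarrow> real" where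
  "green mu x y = (\<Sum>n. nstep mu n x y) / vmeas mu y"

definition three_G :: "('a \<Rightarrow> 'a \<Rightarrow> real) \<Rightarrow> bool" where
  "three_G mu \<longleftrightarrow> (\<exists>\<kappa>\<ge>1. \<forall>x y z.
      1 / green mu x y \<le> \<kappa> * (1 / green mu x z + 1 / green mu z y))"

definition has_pos_solution :: "('a \<Rightarrow> 'a \<Rightarrow> real) \<Rightarrow> ('a \<Rightarrow> real) \<Rightarrow> real \<Rightarrow> bool" where
  "has_pos_solution mu \<sigma> q \<longleftrightarrow>
     (\<exists>u. (\<forall>x. u x > 0) \<and> (\<forall>x. - laplacian mu u x \<ge> \<sigma> x * u x powr q))"

end

theory Submission
  imports Defs
begin

definition Pop :: "('a \<Rightarrow> 'a \<Rightarrow> real) \<Rightarrow> ('a \<Rightarrow> real) \<Rightarrow> 'a \<Rightarrow> real" where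
  "Pop mu f x = (\<Sum>z\<in>nbrs mu x. trans_prob mu x z * f z)"

primrec Piter :: "('a \<Rightarrow> 'a \<Rightarrow> real) \<Rightarrow> nat \<Rightarrow> ('a \<Rightarrow> real) \<Rightarrow> 'a \<Rightarrow> real" where
  "Piter mu 0 f = f"
| "Piter mu (Suc n) f = Pop mu (Piter mu n f)"

primrec reach :: "('a \<Rightarrow> 'a \<Rightarrow> real) \<Rightarrow> nat \<Rightarrow> 'a \<Rightarrow> 'a set" where
  "reach mu 0 x = {x}"
| "reach mu (Suc n) x = (\<Union>z\<in>nbrs mu x. reach mu n z)"

definition gs :: "('a \<Rightarrow> 'a \<Rightarrow> real) \<Rightarrow> 'a \<Rightarrow> 'a \<Rightarrow> real" where
  "gs mu x y = (\<Sum>n. nstep mu n x y)"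

locale wg =
  fixes mu :: "'a \<Rightarrow> 'a \<Rightarrow> real"
  assumes wgr: "weighted_graph mu" and inf: "infinite (UNIV :: 'a set)"
    and conn: "connected_graph mu" and lf: "locally_finite mu"
begin

lemma mu_sym: "mu x y = mu y x" using wgr by (simp add: weighted_graph_def)
lemma mu_nonneg: "mu x y \<ge> 0" using wgr by (simp add: weighted_graph_def)
lemma fin_N: "finite (nbrs mu x)" using lf by (simp add: locally_finite_def)
lemma in_N: "y \<in> nbrs mu x \<longleftrightarrow> mu x y > 0" by (simp add: nbrs_def adj_def)
lemma mu_notin: "y \<notin> nbrs mu x \<Longrightarrow> mu x y = 0"
  using mu_nonneg[of x y] in_N[of y x] by simp

lemma vmeas_pos: "vmeas mu x > 0"
proof -
  obtain y where "y \<noteq> x" using inf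
    by (metis UNIV_I finite.simps insertCI subsetI finite_subset)
  moreover have "(adj mu)\<^sup>*\<^sup>* x y" using conn by (simp add: connected_graph_def)
  ultimately obtain z where "adj mu x z"
    by (metis converse_rtranclpE)
  then have "z \<in> nbrs mu x" "mu x z > 0" by (auto simp: nbrs_def adj_def)
  then show ?thesis unfolding vmeas_def
    by (intro sum_pos2[OF fin_N]) (auto simp: mu_nonneg)
qed

lemma P_nonneg: "trans_prob mu x y \<ge> 0"
  unfolding trans_prob_def by (intro divide_nonneg_pos mu_nonneg vmeas_pos)

lemma P_notin: "y \<notin> nbrs mu x \<Longrightarrow> trans_prob mu x y = 0"
  by (simp add: trans_prob_def mu_notin)

lemma P_sum: "(\<Sum>z\<in>nbrs mu x. trans_prob mu x z) = 1"
  using vmeas_pos[of x] unfolding trans_prob_def vmeas_def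
  by (simp add: sum_divide_distrib[symmetric])

lemma Pop_mono: "(\<And>y. f y \<le> g y) \<Longrightarrow> Pop mu f x \<le> Pop mu g x"
  unfolding Pop_def by (intro sum_mono mult_left_mono) (auto simp: P_nonneg)

lemma Pop_const: "Pop mu (\<lambda>_. c) x = c"
  unfolding Pop_def by (simp add: sum_distrib_right[symmetric] P_sum)

lemma Pop_lin: "Pop mu (\<lambda>y. a * f y + b * g y) x = a * Pop mu f x + b * Pop mu g x"
  unfolding Pop_def by (simp add: algebra_simps sum.distrib sum_distrib_left)

lemma laplacian_eq: "laplacian mu u x = Pop mu u x - u x"
proof -
  have "laplacian mu u x = (1 / vmeas mu x) * ((\<Sum>y\<in>nbrs mu x. mu x y * u y) - vmeas mu x * u x)"
    unfolding laplacian_def vmeas_def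
    by (simp add: algebra_simps sum_subtractf sum_distrib_left sum_distrib_right)
  also have "\<dots> = Pop mu u x - u x"
    using vmeas_pos[of x] unfolding Pop_def trans_prob_def
    by (simp add: field_simps sum_divide_distrib)
  finally show ?thesis .
qed

lemma finite_reach: "finite (reach mu n x)"
  by (induction n arbitrary: x) (auto simp: fin_N)

lemma nstep_nonneg: "nstep mu n x y \<ge> 0"
  by (induction n arbitrary: x) (auto intro!: sum_nonneg mult_nonneg_nonneg P_nonneg)

lemma nstep_zero: "y \<notin> reach mu n x \<Longrightarrow> nstep mu n x y = 0"
  by (induction n arbitrary: x) auto

lemma Piter_formula: "Piter mu n f x = (\<Sum>y\<in>reach mu n x. nstep mu n x y * f y)"
proof (induction n arbitrary: x)
  case 0 then show ?case by simp
next
  case (Suc n)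
  have "Piter mu (Suc n) f x = (\<Sum>z\<in>nbrs mu x. trans_prob mu x z * (\<Sum>y\<in>reach mu n z. nstep mu n z y * f y))"
    by (simp add: Pop_def Suc)
  also have "\<dots> = (\<Sum>z\<in>nbrs mu x. trans_prob mu x z * (\<Sum>y\<in>reach mu (Suc n) x. nstep mu n z y * f y))"
  proof (rule sum.cong[OF refl])
    fix z assume z: "z \<in> nbrs mu x"
    have "(\<Sum>y\<in>reach mu n z. nstep mu n z y * f y) = (\<Sum>y\<in>reach mu (Suc n) x. nstep mu n z y * f y)"
      by (rule sum.mono_neutral_left) (use z finite_reach[of "Suc n" x] finite_reach nstep_zero in auto)
    then show "trans_prob mu x z * (\<Sum>y\<in>reach mu n z. nstep mu n z y * f y) = trans_prob mu x z * (\<Sum>y\<in>reach mu (Suc n) x. nstep mu n z y * f y)"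
      by simp
  qed
  also have "\<dots> = (\<Sum>y\<in>reach mu (Suc n) x. (\<Sum>z\<in>nbrs mu x. trans_prob mu x z * nstep mu n z y) * f y)"
    by (simp add: sum_distrib_left sum_distrib_right mult.assoc sum.swap[of _ "nbrs mu x"])
  finally show ?case by simp
qed

lemma Piter_superset: "finite S \<Longrightarrow> reach mu n x \<subseteq> S \<Longrightarrow> Piter mu n f x = (\<Sum>y\<in>S. nstep mu n x y * f y)"
  unfolding Piter_formula by (rule sum.mono_neutral_left) (auto simp: finite_reach nstep_zero)

lemma Piter_ge: "finite F \<Longrightarrow> (\<And>y. f y \<ge> 0) \<Longrightarrow> (\<Sum>y\<in>F. nstep mu n x y * f y) \<le> Piter mu n f x"
proof -
  assume F: "finite F" and f: "\<And>y. f y \<ge> 0"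
  have "(\<Sum>y\<in>F. nstep mu n x y * f y) \<le> (\<Sum>y\<in>F \<union> reach mu n x. nstep mu n x y * f y)"
    by (rule sum_mono2) (auto simp: F finite_reach nstep_nonneg f)
  also have "\<dots> = Piter mu n f x"
    by (rule Piter_superset[symmetric]) (auto simp: F finite_reach)
  finally show ?thesis .
qed

lemma Piter_mono: "(\<And>y. f y \<le> g y) \<Longrightarrow> Piter mu n f x \<le> Piter mu n g x"
  unfolding Piter_formula by (intro sum_mono mult_left_mono) (auto simp: nstep_nonneg)

lemma Piter_lin: "Piter mu n (\<lambda>y. a * f y + b * g y) x = a * Piter mu n f x + b * Piter mu n g x"
  unfolding Piter_formula by (simp add: algebra_simps sum.distrib sum_distrib_left)

lemma Piter_const: "Piter mu n (\<lambda>_. c) x = c"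
proof (induction n arbitrary: x)
  case (Suc n)
  then have "Piter mu n (\<lambda>_. c) = (\<lambda>_. c)" by (simp add: fun_eq_iff)
  then show ?case by (simp add: Pop_const)
qed simp

lemma Piter_Pop: "Piter mu n (Pop mu f) = Pop mu (Piter mu n f)"
  by (induction n) auto

lemma Piter_Suc': "Piter mu (Suc n) f = Piter mu n (Pop mu f)"
  by (simp add: Piter_Pop)

lemma nstep_add: "nstep mu (m + n) x y = Piter mu m (\<lambda>z. nstep mu n z y) x"
proof (induction m arbitrary: x)
  case (Suc m) then show ?case by (simp add: Pop_def)
qed simp

lemma nstep_add': "nstep mu (m + n) x y = (\<Sum>z\<in>reach mu m x. nstep mu m x z * nstep mu n z y)"
  using nstep_add Piter_formula by simp

lemma nstep_one: "nstep mu (Suc 0) z y = trans_prob mu z y"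
proof (cases "y \<in> nbrs mu z")
  case True
  then show ?thesis by (simp add: fin_N if_distrib sum.delta cong: if_cong)
next
  case False
  then show ?thesis by (auto simp: P_notin intro!: sum.neutral)
qed

lemma nstep_last: "nstep mu (Suc n) x y = (\<Sum>z\<in>reach mu n x. nstep mu n x z * trans_prob mu z y)"
proof -
  have "nstep mu (Suc n) x y = nstep mu (n + Suc 0) x y" by simp
  also have "\<dots> = (\<Sum>z\<in>reach mu n x. nstep mu n x z * trans_prob mu z y)"
    by (simp only: nstep_add' nstep_one)
  finally show ?thesis .
qed


lemma Piter_add: "Piter mu n (\<lambda>y. f y + g y) x = Piter mu n f x + Piter mu n g x"
  using Piter_lin[of n 1 f 1 g x] by simp

lemma Piter_nonneg: "(\<And>y. f y \<ge> 0) \<Longrightarrow> Piter mu n f x \<ge> 0"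
  using Piter_mono[of "\<lambda>_. 0" f n x] by (simp add: Piter_const)

lemma tele_le:
  assumes "\<And>x. Pop mu \<psi> x + f x \<le> \<psi> x"
  shows "(\<Sum>k<n. Piter mu k f x) + Piter mu n \<psi> x \<le> \<psi> x"
proof (induction n)
  case 0 then show ?case by simp
next
  case (Suc n)
  have "(\<Sum>k<Suc n. Piter mu k f x) + Piter mu (Suc n) \<psi> x
      = (\<Sum>k<n. Piter mu k f x) + Piter mu n (\<lambda>y. f y + Pop mu \<psi> y) x"
    by (simp add: Piter_add Piter_Suc'[of n] del: Piter.simps)
  also have "\<dots> \<le> (\<Sum>k<n. Piter mu k f x) + Piter mu n \<psi> x"
    using assms by (intro add_left_mono Piter_mono) (simp add: add.commute)
  finally show ?case using Suc by simp
qed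

lemma tele_eq:
  assumes "\<And>x. Pop mu \<psi> x + f x = \<psi> x"
  shows "(\<Sum>k<n. Piter mu k f x) + Piter mu n \<psi> x = \<psi> x"
proof (induction n)
  case 0 then show ?case by simp
next
  case (Suc n)
  have "(\<Sum>k<Suc n. Piter mu k f x) + Piter mu (Suc n) \<psi> x
      = (\<Sum>k<n. Piter mu k f x) + Piter mu n (\<lambda>y. f y + Pop mu \<psi> y) x"
    by (simp add: Piter_add Piter_Suc'[of n] del: Piter.simps)
  also have "(\<lambda>y. f y + Pop mu \<psi> y) = \<psi>"
    using assms by (simp add: fun_eq_iff add.commute)
  finally show ?case using Suc by simp
qed

lemma tele_nonneg:
  assumes "\<And>x. Pop mu \<psi> x + f x \<le> \<psi> x" "\<And>x. \<psi> x \<ge> 0"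
  shows "(\<Sum>k<n. Piter mu k f x) \<le> \<psi> x"
  using tele_le[OF assms(1), where n = n and x = x] Piter_nonneg[where f = \<psi> and n = n and x = x, OF assms(2)] by linarith

lemma reversible: "vmeas mu x * nstep mu n x y = vmeas mu y * nstep mu n y x"
proof (induction n arbitrary: x y)
  case 0 then show ?case by simp
next
  case (Suc n)
  let ?U = "nbrs mu x \<union> reach mu n y"
  have finU: "finite ?U" by (simp add: fin_N finite_reach)
  have z0: "nstep mu n z y = 0" if "z \<notin> reach mu n y" for z
  proof -
    have "vmeas mu z * nstep mu n z y = 0" using Suc[of z y] nstep_zero[OF that] by simp
    then show ?thesis using vmeas_pos[of z] by simp
  qed
  have "vmeas mu x * nstep mu (Suc n) x y = (\<Sum>z\<in>nbrs mu x. mu x z * nstep mu n z y)"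
    using vmeas_pos[of x] by (simp add: sum_distrib_left trans_prob_def)
  also have "\<dots> = (\<Sum>z\<in>?U. mu x z * nstep mu n z y)"
    by (rule sum.mono_neutral_left) (auto simp: finU mu_notin fin_N finite_reach)
  also have "\<dots> = (\<Sum>z\<in>reach mu n y. mu x z * nstep mu n z y)"
    by (rule sum.mono_neutral_right) (auto simp: finU z0 fin_N finite_reach)
  also have "\<dots> = (\<Sum>z\<in>reach mu n y. vmeas mu y * (nstep mu n y z * trans_prob mu z x))"
  proof (rule sum.cong[OF refl])
    fix z
    have e: "vmeas mu y * nstep mu n y z = vmeas mu z * nstep mu n z y" using Suc.IH[of y z] by simp
    have "vmeas mu y * (nstep mu n y z * trans_prob mu z x) = (vmeas mu y * nstep mu n y z) * mu z x / vmeas mu z"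
      by (simp add: trans_prob_def)
    also have "\<dots> = (vmeas mu z * nstep mu n z y) * mu z x / vmeas mu z" by (simp only: e)
    also have "\<dots> = mu x z * nstep mu n z y" using vmeas_pos[of z] by (simp add: mu_sym)
    finally show "mu x z * nstep mu n z y = vmeas mu y * (nstep mu n y z * trans_prob mu z x)" by simp
  qed
  also have "\<dots> = vmeas mu y * nstep mu (Suc n) y x"
    by (simp add: nstep_last[of n y x] sum_distrib_left del: nstep.simps)
  finally show ?case .
qed

lemma edge_exists:
  fixes u :: "'a \<Rightarrow> real"
  assumes "(adj mu)\<^sup>*\<^sup>* a b" "u a \<ge> c" "u b < c"
  shows "\<exists>x y. adj mu x y \<and> u x \<ge> c \<and> u y < c"
  using assms
proof (induction rule: converse_rtranclp_induct)
  case base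
  then have False by linarith
  then show ?case ..
next
  case (step x z)
  show ?case
  proof (cases "u z \<ge> c")
    case True then show ?thesis using step by blast
  next
    case False then show ?thesis using step by (meson not_le)
  qed
qed

lemma path_pos:
  assumes "(adj mu)\<^sup>*\<^sup>* x y" shows "\<exists>n. nstep mu n x y > 0"
  using assms
proof (induction rule: converse_rtranclp_induct)
  case base then show ?case by (intro exI[of _ 0]) simp
next
  case (step x z)
  then obtain n where n: "nstep mu n z y > 0" by blast
  have z: "z \<in> nbrs mu x" using step(1) by (simp add: nbrs_def)
  have Pz: "trans_prob mu x z > 0" using step(1) vmeas_pos[of x]
    by (simp add: trans_prob_def adj_def)
  have "trans_prob mu x z * nstep mu n z y \<le> nstep mu (Suc n) x y"
    by (simp only: nstep.simps, rule member_le_sum[OF z])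
       (auto simp: fin_N P_nonneg nstep_nonneg)
  moreover have "trans_prob mu x z * nstep mu n z y > 0" using Pz n by simp
  ultimately show ?case by (intro exI[of _ "Suc n"]) linarith
qed

lemma nstep_pos: "\<exists>n. nstep mu n x y > 0"
  using path_pos conn by (simp add: connected_graph_def)

lemma nstep_mult_le: "nstep mu m x z * nstep mu n z y \<le> nstep mu (m + n) x y"
proof (cases "z \<in> reach mu m x")
  case True
  then show ?thesis unfolding nstep_add'
    by (intro member_le_sum) (auto simp: finite_reach nstep_nonneg)
next
  case False
  then show ?thesis by (simp add: nstep_zero nstep_nonneg)
qed

end

locale wgn = wg +
  assumes np: "non_parabolic mu"
begin

lemma summable_nstep: "summable (\<lambda>n. nstep mu n x y)"
proof -
  obtain u where u0: "\<And>x. u x \<ge> 0" and ul: "\<And>x. laplacian mu u x \<le> 0"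
    and unc: "\<not> (\<exists>c. \<forall>x. u x = c)"
    using np unfolding non_parabolic_def by blast
  obtain a b where ab: "u a < u b"
  proof -
    obtain b where "u b \<noteq> u x" using unc by blast
    then show ?thesis using that by (meson linorder_neqE_linordered_idom)
  qed
  have ba: "(adj mu)\<^sup>*\<^sup>* b a" using conn by (simp add: connected_graph_def)
  obtain x0 y0 where e: "adj mu x0 y0" "u x0 \<ge> u b" "u y0 < u b"
    using edge_exists[where u = u and c = "u b", OF ba] ab by auto
  define c where "c = u b"
  define w where "w = (\<lambda>z. min (u z) c)"
  have Pu: "Pop mu u z \<le> u z" for z using ul[of z] by (simp add: laplacian_eq)
  have w0: "w z \<ge> 0" for z using u0[of z] ab u0[of a] by (simp add: w_def c_def)
  have Pw: "Pop mu w z \<le> w z" for z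
  proof -
    have "Pop mu w z \<le> Pop mu u z" by (rule Pop_mono) (simp add: w_def)
    moreover have "Pop mu w z \<le> Pop mu (\<lambda>_. c) z" by (rule Pop_mono) (simp add: w_def)
    ultimately show ?thesis using Pu[of z] by (simp add: w_def Pop_const)
  qed
  have y0: "y0 \<in> nbrs mu x0" using e(1) by (simp add: nbrs_def)
  have Py0: "trans_prob mu x0 y0 > 0" using e(1) vmeas_pos[of x0]
    by (simp add: trans_prob_def adj_def)
  have "Pop mu w x0 < Pop mu (\<lambda>_. c) x0" unfolding Pop_def
  proof (rule sum_strict_mono_ex1[OF fin_N])
    show "\<forall>z\<in>nbrs mu x0. trans_prob mu x0 z * w z \<le> trans_prob mu x0 z * c"
      by (auto intro!: mult_left_mono simp: P_nonneg w_def)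
    show "\<exists>z\<in>nbrs mu x0. trans_prob mu x0 z * w z < trans_prob mu x0 z * c"
      using y0 Py0 e(3) by (intro bexI[of _ y0]) (auto simp: w_def c_def)
  qed
  then have Pwx0: "Pop mu w x0 < w x0" using e(2) by (simp add: Pop_const w_def c_def)
  define f where "f = (\<lambda>z. w z - Pop mu w z)"
  have f0: "f z \<ge> 0" for z using Pw[of z] by (simp add: f_def)
  have fx0: "f x0 > 0" using Pwx0 by (simp add: f_def)
  have sx0: "summable (\<lambda>n. nstep mu n z x0)" for z
  proof (rule summableI_nonneg_bounded[where x = "w z / f x0"])
    show "nstep mu n z x0 \<ge> 0" for n by (rule nstep_nonneg)
    fix n
    have h1: "(\<Sum>k<n. Piter mu k f z) \<le> w z"
      by (rule tele_nonneg) (auto simp: f_def w0)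
    have hk: "nstep mu k z x0 * f x0 \<le> Piter mu k f z" for k
      using Piter_ge[of "{x0}" f k z] f0 by simp
    have "(\<Sum>k<n. nstep mu k z x0 * f x0) \<le> (\<Sum>k<n. Piter mu k f z)"
      by (intro sum_mono hk)
    then have "(\<Sum>k<n. nstep mu k z x0 * f x0) \<le> w z"
      using h1 by linarith
    then have "(\<Sum>k<n. nstep mu k z x0) * f x0 \<le> w z"
      by (simp add: sum_distrib_right)
    then show "(\<Sum>k<n. nstep mu k z x0) \<le> w z / f x0"
      using fx0 by (simp add: field_simps)
  qed
  obtain m where m: "nstep mu m y x0 > 0" using nstep_pos by blast
  show ?thesis
  proof (rule summable_comparison_test'[where N = 0])
    have "summable (\<lambda>n. (\<lambda>n. nstep mu n x x0) (n + m))"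
      using summable_iff_shift[where f = "\<lambda>n. nstep mu n x x0" and k = m] sx0[of x] by simp
    then show "summable (\<lambda>n. nstep mu (n + m) x x0 / nstep mu m y x0)"
      by (intro summable_divide) simp
    fix n
    have "nstep mu n x y * nstep mu m y x0 \<le> nstep mu (n + m) x x0" by (rule nstep_mult_le)
    then show "norm (nstep mu n x y) \<le> nstep mu (n + m) x x0 / nstep mu m y x0"
      using m by (simp add: nstep_nonneg field_simps)
  qed
qed

end

context wgn begin

lemma gs_nonneg: "gs mu x y \<ge> 0"
  unfolding gs_def by (intro suminf_nonneg summable_nstep nstep_nonneg)

lemma gs_pos: "gs mu x y > 0"
proof -
  obtain n where "nstep mu n x y > 0" using nstep_pos by blast
  then show ?thesis unfolding gs_def
    using suminf_pos_iff[OF summable_nstep nstep_nonneg] by blast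
qed

lemma green_eq: "green mu x y = gs mu x y / vmeas mu y"
  by (simp add: green_def gs_def)

lemma green_pos: "green mu x y > 0"
  using gs_pos vmeas_pos by (simp add: green_eq)

lemma gs_step: "(\<Sum>z\<in>nbrs mu x. trans_prob mu x z * gs mu z y) = gs mu x y - (if x = y then 1 else 0)"
proof -
  have "(\<Sum>z\<in>nbrs mu x. trans_prob mu x z * gs mu z y)
      = (\<Sum>z\<in>nbrs mu x. (\<Sum>n. trans_prob mu x z * nstep mu n z y))"
    unfolding gs_def by (simp add: suminf_mult summable_nstep)
  also have "\<dots> = (\<Sum>n. \<Sum>z\<in>nbrs mu x. trans_prob mu x z * nstep mu n z y)"
    by (rule suminf_sum[symmetric]) (simp add: summable_mult summable_nstep)
  also have "\<dots> = (\<Sum>n. nstep mu (Suc n) x y)" by simp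
  also have "\<dots> = gs mu x y - nstep mu 0 x y"
    unfolding gs_def by (rule suminf_split_head[OF summable_nstep])
  finally show ?thesis by simp
qed

lemma Pop_gs: "Pop mu (\<lambda>z. gs mu z y) x = gs mu x y - (if x = y then 1 else 0)"
  unfolding Pop_def by (rule gs_step)

lemma gs_rev: "vmeas mu x * gs mu x y = vmeas mu y * gs mu y x"
proof -
  have "vmeas mu x * gs mu x y = (\<Sum>n. vmeas mu x * nstep mu n x y)"
    unfolding gs_def by (simp add: suminf_mult summable_nstep)
  also have "\<dots> = (\<Sum>n. vmeas mu y * nstep mu n y x)" by (simp add: reversible)
  also have "\<dots> = vmeas mu y * gs mu y x"
    unfolding gs_def by (simp add: suminf_mult summable_nstep)
  finally show ?thesis .
qed

lemma green_sym: "green mu x y = green mu y x"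
proof -
  have "gs mu x y / vmeas mu y = gs mu y x / vmeas mu x"
    using gs_rev[of x y] vmeas_pos[of x] vmeas_pos[of y] by (simp add: field_simps)
  then show ?thesis by (simp add: green_eq)
qed

lemma Piter_gs: "Piter mu n (\<lambda>z. gs mu z y) x = (\<Sum>k. nstep mu (k + n) x y)"
proof -
  have "Piter mu n (\<lambda>z. gs mu z y) x = (\<Sum>z\<in>reach mu n x. nstep mu n x z * (\<Sum>k. nstep mu k z y))"
    by (simp add: Piter_formula gs_def)
  also have "\<dots> = (\<Sum>z\<in>reach mu n x. (\<Sum>k. nstep mu n x z * nstep mu k z y))"
    by (simp add: suminf_mult summable_nstep)
  also have "\<dots> = (\<Sum>k. \<Sum>z\<in>reach mu n x. nstep mu n x z * nstep mu k z y)"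
    by (rule suminf_sum[symmetric]) (simp add: summable_mult summable_nstep)
  also have "\<dots> = (\<Sum>k. nstep mu (k + n) x y)"
    by (simp only: nstep_add'[of n _ x y, symmetric] add.commute)
  finally show ?thesis .
qed

lemma Piter_gs_lim: "(\<lambda>n. Piter mu n (\<lambda>z. gs mu z y) x) \<longlonglongrightarrow> 0"
proof (rule LIMSEQ_I)
  fix r :: real assume "r > 0"
  then obtain N where "\<forall>n\<ge>N. norm (\<Sum>i. nstep mu (i + n) x y) < r"
    using suminf_exist_split[OF _ summable_nstep] by blast
  then show "\<exists>N. \<forall>n\<ge>N. norm (Piter mu n (\<lambda>z. gs mu z y) x - 0) < r"
    by (auto simp: Piter_gs)
qed

lemma Pop_gs_le: "Pop mu (\<lambda>z. gs mu z y) x \<le> gs mu x y"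
  by (simp add: Pop_gs)

end

lemma powr_tangent:
  fixes q s t :: real
  assumes q: "q > 1" and s: "s > 0" and t: "t > 0"
  shows "s powr (1 - q) \<ge> t powr (1 - q) + (1 - q) * t powr (- q) * (s - t)"
proof -
  have cv: "convex_on {0<..} (\<lambda>x::real. x powr (1 - q))"
  proof (rule convex_on_realI[where f' = "\<lambda>x. (1 - q) * x powr (- q)"])
    show "connected {0::real<..}" by simp
    fix x :: real assume "x \<in> {0<..}"
    then show "((\<lambda>x. x powr (1 - q)) has_real_derivative (1 - q) * x powr (- q)) (at x)"
      using has_real_derivative_powr[of x "1 - q"] by simp
  next
    fix x y :: real assume "x \<in> {0<..}" "y \<in> {0<..}" "x \<le> y"
    then have "y powr (- q) \<le> x powr (- q)"
      using q by (intro powr_mono2') auto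
    then show "(1 - q) * x powr (- q) \<le> (1 - q) * y powr (- q)"
      using q by (intro mult_left_mono_neg) auto
  qed
  have "(1 - q) * t powr (- q) * (s - t) \<le> s powr (1 - q) - t powr (1 - q)"
    using s t
    by (intro convex_on_imp_above_tangent[OF cv])
       (auto simp: interior_open has_field_derivative_at_within[OF has_real_derivative_powr[of t "1 - q", simplified]])
  then show ?thesis by simp
qed

lemma Phi_tangent:
  fixes q s v a :: real
  assumes q: "q > 1" and s: "s > 0" and v: "v > 0"
  shows "(a - s powr (1 - q)) / (q - 1) \<le> (a - v powr (1 - q)) / (q - 1) + v powr (- q) * (s - v)"
proof -
  have "s powr (1 - q) \<ge> v powr (1 - q) + (1 - q) * v powr (- q) * (s - v)"
    by (rule powr_tangent[OF q s v])
  then have "a - s powr (1 - q) \<le> (a - v powr (1 - q)) + (q - 1) * (v powr (- q) * (s - v))"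
    by (simp add: algebra_simps)
  then have "(a - s powr (1 - q)) / (q - 1) \<le> ((a - v powr (1 - q)) + (q - 1) * (v powr (- q) * (s - v))) / (q - 1)"
    using q by (intro divide_right_mono) auto
  also have "\<dots> = (a - v powr (1 - q)) / (q - 1) + v powr (- q) * (s - v)"
    using q by (simp add: field_simps)
  finally show ?thesis .
qed

lemma pm1: "(v::real) > 0 \<Longrightarrow> v powr (- q) * v = v powr (1 - q)"
proof -
  assume v: "v > 0"
  have "v powr (1 - q) = v powr (- q + 1)" by simp
  also have "\<dots> = v powr (- q) * v powr 1" by (rule powr_add)
  also have "\<dots> = v powr (- q) * v" using v by simp
  finally show ?thesis by simp
qed

lemma pm2: "(v::real) > 0 \<Longrightarrow> v powr (- q) * v powr q = 1"
  by (simp add: powr_add[symmetric])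

context wg begin

lemma key:
  fixes H u \<sigma> :: "'a \<Rightarrow> real" and q c :: real
  assumes q: "q > 1" and c: "c > 0"
    and Hpos: "\<And>x. H x > 0" and Hsup: "\<And>x. Pop mu H x \<le> H x"
    and ulow: "\<And>x. c * H x \<le> u x"
    and \<sigma>0: "\<And>x. \<sigma> x \<ge> 0"
    and sol: "\<And>x. Pop mu u x + \<sigma> x * u x powr q \<le> u x"
  shows "(\<Sum>k<n. Piter mu k (\<lambda>y. \<sigma> y * H y powr q) x) \<le> H x * (q * c powr (1 - q) / (q - 1))"
proof -
  define a where "a = q * c powr (1 - q)"
  define \<Phi> where "\<Phi> = (\<lambda>s::real. (a - s powr (1 - q)) / (q - 1))"
  define \<psi> where "\<psi> = (\<lambda>z. H z * \<Phi> (u z / H z))"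
  have upos: "u x > 0" for x using ulow[of x] c Hpos[of x] by (smt (verit) mult_pos_pos)
  have vc: "u x / H x \<ge> c" for x using ulow[of x] Hpos[of x] by (simp add: field_simps)
  have vpos: "u x / H x > 0" for x using upos[of x] Hpos[of x] by simp
  have pw_le: "(u x / H x) powr (1 - q) \<le> c powr (1 - q)" for x
    using vc[of x] c q by (intro powr_mono2') auto
  have cq: "c powr (1 - q) > 0" using c by simp
  have Phi_ge: "\<Phi> (u x / H x) - (u x / H x) powr (1 - q) \<ge> 0" for x
  proof -
    have "q * (u x / H x) powr (1 - q) \<le> a"
      unfolding a_def using pw_le[of x] q by (intro mult_left_mono) auto
    then have "(u x / H x) powr (1 - q) * (q - 1) \<le> a - (u x / H x) powr (1 - q)"
      by (simp add: algebra_simps)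
    then have "(u x / H x) powr (1 - q) \<le> (a - (u x / H x) powr (1 - q)) / (q - 1)"
      using q by (simp add: field_simps)
    then show ?thesis by (simp add: \<Phi>_def)
  qed
  have Phi_nonneg: "\<Phi> (u x / H x) \<ge> 0" for x
    using Phi_ge[of x] vpos[of x] by (smt (verit) powr_gt_zero)
  have psi0: "\<psi> x \<ge> 0" for x unfolding \<psi>_def using Hpos[of x] Phi_nonneg[of x] by simp
  have psi_le: "\<psi> x \<le> H x * (a / (q - 1))" for x
  proof -
    have "\<Phi> (u x / H x) \<le> a / (q - 1)"
      unfolding \<Phi>_def using q vpos[of x] by (intro divide_right_mono) auto
    then show ?thesis unfolding \<psi>_def using Hpos[of x] by (intro mult_left_mono) auto
  qed
  have step: "Pop mu \<psi> x + \<sigma> x * H x powr q \<le> \<psi> x" for x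
  proof -
    define v where "v = u x / H x"
    have v: "v > 0" using vpos by (simp add: v_def)
    have uv: "u x = v * H x" using Hpos[of x] by (simp add: v_def)
    have tz: "\<psi> z \<le> (\<Phi> v - v powr (1 - q)) * H z + v powr (- q) * u z" for z
    proof -
      have "\<Phi> (u z / H z) \<le> \<Phi> v + v powr (- q) * (u z / H z - v)"
        unfolding \<Phi>_def by (rule Phi_tangent[OF q vpos v])
      then have "H z * \<Phi> (u z / H z) \<le> H z * (\<Phi> v + v powr (- q) * (u z / H z - v))"
        using Hpos[of z] by (intro mult_left_mono) auto
      also have "\<dots> = \<Phi> v * H z + v powr (- q) * u z - (v powr (- q) * v) * H z"
        using Hpos[of z] by (simp add: field_simps)
      also have "v powr (- q) * v = v powr (1 - q)"
        using v by (rule pm1)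
      finally show ?thesis unfolding \<psi>_def by (simp add: algebra_simps)
    qed
    have "Pop mu \<psi> x \<le> Pop mu (\<lambda>z. (\<Phi> v - v powr (1 - q)) * H z + v powr (- q) * u z) x"
      by (rule Pop_mono[OF tz])
    also have "\<dots> = (\<Phi> v - v powr (1 - q)) * Pop mu H x + v powr (- q) * Pop mu u x"
      by (rule Pop_lin)
    finally have P1: "Pop mu \<psi> x \<le> (\<Phi> v - v powr (1 - q)) * Pop mu H x + v powr (- q) * Pop mu u x" .
    have vq: "v powr (- q) > 0" using v by simp
    have "v powr (- q) * Pop mu u x \<le> v powr (- q) * (u x - \<sigma> x * u x powr q)"
      using sol[of x] vq by (intro mult_left_mono) auto
    also have "\<dots> = v powr (1 - q) * H x - \<sigma> x * H x powr q"
    proof -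
      have e1: "v powr (- q) * u x = v powr (1 - q) * H x"
        using pm1[OF v, of q] by (simp add: uv mult.assoc[symmetric])
      have "u x powr q = v powr q * H x powr q"
        using v Hpos[of x] by (simp add: uv powr_mult)
      then have e2: "v powr (- q) * u x powr q = H x powr q"
        using pm2[OF v, of q] by (simp add: mult.assoc[symmetric])
      show ?thesis using e1 e2 by (simp add: algebra_simps)
    qed
    finally have P2: "v powr (- q) * Pop mu u x \<le> v powr (1 - q) * H x - \<sigma> x * H x powr q" .
    have P3: "(\<Phi> v - v powr (1 - q)) * Pop mu H x \<le> (\<Phi> v - v powr (1 - q)) * H x"
      using Phi_ge[of x] Hsup[of x] by (intro mult_left_mono) (auto simp: v_def)
    have "\<psi> x = H x * \<Phi> v" by (simp add: \<psi>_def v_def)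
    then show ?thesis using P1 P2 P3 by (simp add: algebra_simps)
  qed
  have "(\<Sum>k<n. Piter mu k (\<lambda>y. \<sigma> y * H y powr q) x) \<le> \<psi> x"
    by (rule tele_nonneg[OF step psi0])
  also have "\<dots> \<le> H x * (a / (q - 1))" by (rule psi_le)
  finally show ?thesis by (simp add: a_def)
qed

end

lemma bounded_summable_on:
  fixes f :: "'b \<Rightarrow> real"
  assumes "\<And>y. y \<in> A \<Longrightarrow> f y \<ge> 0" "\<And>F. finite F \<Longrightarrow> F \<subseteq> A \<Longrightarrow> sum f F \<le> B"
  shows "f summable_on A \<and> infsum f A \<le> B"
proof
  show s: "f summable_on A"
    by (rule nonneg_bdd_above_summable_on) (use assms in \<open>auto intro!: bdd_aboveI[where M = B]\<close>)
  show "infsum f A \<le> B" by (rule infsum_le_finite_sums[OF s]) (use assms in auto)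
qed

context wg begin

lemma Pop_scale: "Pop mu (\<lambda>y. c * f y) x = c * Pop mu f x"
  using Pop_lin[of c f 0 f x] by simp

lemma Piter_scale: "Piter mu n (\<lambda>y. c * f y) x = c * Piter mu n f x"
  using Piter_lin[of n c f 0 f x] by simp

end

context wgn begin

lemma sol_Pop:
  assumes "\<And>x. - laplacian mu u x \<ge> \<sigma> x * u x powr q"
  shows "Pop mu u x + \<sigma> x * u x powr q \<le> u x"
  using assms[of x] by (simp add: laplacian_eq)

lemma h_sup: "Pop mu (\<lambda>z. (1 / vmeas mu p) * gs mu z p) x \<le> (1 / vmeas mu p) * gs mu x p"
  unfolding Pop_scale using Pop_gs_le[of p x] vmeas_pos[of p] by (intro mult_left_mono) auto

lemma lower_bound:
  assumes q: "q > 1" and \<sigma>0: "\<And>x. \<sigma> x \<ge> 0" and sp: "\<sigma> p > 0"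
    and upos: "\<And>x. u x > 0" and sol: "\<And>x. Pop mu u x + \<sigma> x * u x powr q \<le> u x"
  shows "(vmeas mu p * \<sigma> p * u p powr q) * ((1 / vmeas mu p) * gs mu x p) \<le> u x"
proof -
  define f where "f = (\<lambda>y. \<sigma> y * u y powr q)"
  have f0: "f y \<ge> 0" for y using \<sigma>0[of y] by (simp add: f_def)
  have fp: "f p > 0" using sp upos[of p] by (simp add: f_def)
  have "(\<Sum>k<n. nstep mu k x p) \<le> u x / f p" for n
  proof -
    have h1: "(\<Sum>k<n. Piter mu k f x) \<le> u x"
      by (rule tele_nonneg) (use sol upos in \<open>auto simp: f_def less_imp_le\<close>)
    have hk: "nstep mu k x p * f p \<le> Piter mu k f x" for k
      using Piter_ge[of "{p}" f k x] f0 by simp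
    have "(\<Sum>k<n. nstep mu k x p * f p) \<le> (\<Sum>k<n. Piter mu k f x)"
      by (intro sum_mono hk)
    then have "(\<Sum>k<n. nstep mu k x p) * f p \<le> u x"
      using h1 by (simp add: sum_distrib_right)
    then show ?thesis using fp by (simp add: field_simps)
  qed
  then have "gs mu x p \<le> u x / f p"
    unfolding gs_def by (intro suminf_le_const summable_nstep)
  then have "gs mu x p * f p \<le> u x" using fp by (simp add: field_simps)
  then show ?thesis using vmeas_pos[of p] by (simp add: f_def field_simps)
qed


lemma h_eq: "(1 / vmeas mu p) * gs mu z p = green mu z p"
  by (simp add: green_eq)

lemma h_pos: "(1 / vmeas mu p) * gs mu z p > 0"
  using gs_pos vmeas_pos by simp

lemma forward_ii:
  assumes q: "q > 1" and \<sigma>0: "\<And>x. \<sigma> x \<ge> 0" and c0: "c0 > 0"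
    and ulow: "\<And>x. c0 * ((1 / vmeas mu p) * gs mu x p) \<le> u x"
    and sol: "\<And>x. Pop mu u x + \<sigma> x * u x powr q \<le> u x"
    and r: "r > 0"
  shows "(\<lambda>y. green mu x y * (\<sigma> y * vmeas mu y)) summable_on {y. green mu p y > 1 / r} \<and>
         (\<Sum>\<^sub>\<infinity>y\<in>{y. green mu p y > 1 / r}. green mu x y * (\<sigma> y * vmeas mu y))
            \<le> (q * c0 powr (1 - q) / (q - 1)) * r powr (q - 1)"
proof (rule bounded_summable_on)
  define M where "M = q * c0 powr (1 - q) / (q - 1)"
  have M0: "M \<ge> 0" using q c0 by (simp add: M_def)
  define h where "h = (\<lambda>z. (1 / vmeas mu p) * gs mu z p)"
  define H where "H = (\<lambda>z. min (h z) (1 / r))"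
  have Hpos: "H z > 0" for z using h_pos r by (simp add: H_def h_def)
  have Hsup: "Pop mu H z \<le> H z" for z
  proof -
    have "Pop mu H z \<le> Pop mu h z" by (rule Pop_mono) (simp add: H_def)
    also have "\<dots> \<le> h z" unfolding h_def by (rule h_sup)
    finally have 1: "Pop mu H z \<le> h z" .
    have "Pop mu H z \<le> Pop mu (\<lambda>_. 1 / r) z" by (rule Pop_mono) (simp add: H_def)
    then have 2: "Pop mu H z \<le> 1 / r" by (simp add: Pop_const)
    show ?thesis using 1 2 by (simp add: H_def)
  qed
  have ulowH: "c0 * H z \<le> u z" for z
  proof -
    have "c0 * H z \<le> c0 * h z" using c0 by (intro mult_left_mono) (auto simp: H_def)
    then show ?thesis using ulow[of z] by (simp add: h_def)
  qed
  have K: "(\<Sum>k<n. Piter mu k (\<lambda>y. \<sigma> y * H y powr q) x) \<le> M / r" for n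
  proof -
    have "(\<Sum>k<n. Piter mu k (\<lambda>y. \<sigma> y * H y powr q) x) \<le> H x * M"
      unfolding M_def by (rule key[OF q c0 Hpos Hsup ulowH \<sigma>0 sol])
    also have "\<dots> \<le> (1 / r) * M" using M0 by (intro mult_right_mono) (auto simp: H_def)
    finally show ?thesis by simp
  qed
  show "\<And>y. y \<in> {y. green mu p y > 1 / r} \<Longrightarrow> green mu x y * (\<sigma> y * vmeas mu y) \<ge> 0"
    using green_pos \<sigma>0 vmeas_pos by (simp add: less_imp_le)
  fix F assume F: "finite F" "F \<subseteq> {y. green mu p y > 1 / r}"
  have HF: "H y = 1 / r" if "y \<in> F" for y
  proof -
    have "green mu p y > 1 / r" using F that by auto
    then have "h y > 1 / r" unfolding h_def h_eq by (simp add: green_sym[of p y])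
    then show ?thesis by (simp add: H_def)
  qed
  have rq: "r powr q * (1 / r) powr q = 1"
    using r by (simp add: powr_mult[symmetric])
  have sF: "\<sigma> y = r powr q * (\<sigma> y * H y powr q)" if "y \<in> F" for y
    using rq HF[OF that] by (simp add: algebra_simps)
  have eq: "(\<Sum>y\<in>F. green mu x y * (\<sigma> y * vmeas mu y)) = (\<Sum>k. \<Sum>y\<in>F. nstep mu k x y * \<sigma> y)"
  proof -
    have "(\<Sum>y\<in>F. green mu x y * (\<sigma> y * vmeas mu y)) = (\<Sum>y\<in>F. gs mu x y * \<sigma> y)"
    proof (rule sum.cong[OF refl])
      fix y
      show "green mu x y * (\<sigma> y * vmeas mu y) = gs mu x y * \<sigma> y"
        using vmeas_pos[of y] by (simp add: green_eq)
    qed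
    also have "\<dots> = (\<Sum>y\<in>F. \<Sum>k. nstep mu k x y * \<sigma> y)"
      unfolding gs_def by (intro sum.cong refl suminf_mult2 summable_nstep)
    also have "\<dots> = (\<Sum>k. \<Sum>y\<in>F. nstep mu k x y * \<sigma> y)"
      by (rule suminf_sum[symmetric]) (intro summable_mult2 summable_nstep)
    finally show ?thesis .
  qed
  have part: "(\<Sum>k<n. \<Sum>y\<in>F. nstep mu k x y * \<sigma> y) \<le> r powr q * (M / r)" for n
  proof -
    have "(\<Sum>k<n. \<Sum>y\<in>F. nstep mu k x y * \<sigma> y)
        = r powr q * (\<Sum>k<n. \<Sum>y\<in>F. nstep mu k x y * (\<sigma> y * H y powr q))"
    proof -
      have "(\<Sum>y\<in>F. nstep mu k x y * \<sigma> y) = r powr q * (\<Sum>y\<in>F. nstep mu k x y * (\<sigma> y * H y powr q))" for k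
        unfolding sum_distrib_left
      proof (rule sum.cong[OF refl])
        fix y assume "y \<in> F"
        then show "nstep mu k x y * \<sigma> y = r powr q * (nstep mu k x y * (\<sigma> y * H y powr q))"
          by (subst sF) (auto simp: algebra_simps)
      qed
      then show ?thesis by (simp add: sum_distrib_left)
    qed
    also have "\<dots> \<le> r powr q * (\<Sum>k<n. Piter mu k (\<lambda>y. \<sigma> y * H y powr q) x)"
      using F(1) \<sigma>0 by (intro mult_left_mono sum_mono Piter_ge) auto
    also have "\<dots> \<le> r powr q * (M / r)" by (intro mult_left_mono K) simp
    finally show ?thesis .
  qed
  have "(\<Sum>k. \<Sum>y\<in>F. nstep mu k x y * \<sigma> y) \<le> r powr q * (M / r)"
    by (intro suminf_le_const part summable_sum summable_mult2 summable_nstep)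
  moreover have "r powr q * (M / r) = M * r powr (q - 1)"
    using r by (simp add: powr_diff)
  ultimately show "(\<Sum>y\<in>F. green mu x y * (\<sigma> y * vmeas mu y)) \<le> (q * c0 powr (1 - q) / (q - 1)) * r powr (q - 1)"
    using eq by (simp add: M_def)
qed

end

context wgn begin

lemma forward_i_fin:
  assumes q: "q > 1" and \<sigma>0: "\<And>x. \<sigma> x \<ge> 0" and c0: "c0 > 0"
    and ulow: "\<And>x. c0 * ((1 / vmeas mu p) * gs mu x p) \<le> u x"
    and sol: "\<And>x. Pop mu u x + \<sigma> x * u x powr q \<le> u x"
    and Y: "finite Y"
  shows "(\<Sum>y\<in>Y. green mu p y powr q * (\<sigma> y * vmeas mu y)) \<le> q * c0 powr (1 - q) / (q - 1)"
proof -
  define M where "M = q * c0 powr (1 - q) / (q - 1)"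
  have M0: "M \<ge> 0" using q c0 by (simp add: M_def)
  define h where "h = (\<lambda>z. (1 / vmeas mu p) * gs mu z p)"
  have hpos: "h z > 0" for z using h_pos by (simp add: h_def)
  have hsup: "Pop mu h z \<le> h z" for z unfolding h_def by (rule h_sup)
  have W: "(\<Sum>k<n. Piter mu k (\<lambda>y. \<sigma> y * h y powr q) x) \<le> h x * M" for n x
    unfolding M_def by (rule key[OF q c0 hpos hsup _ \<sigma>0 sol]) (use ulow in \<open>simp add: h_def\<close>)
  define w where "w = (\<lambda>y. \<sigma> y * h y powr q * vmeas mu y)"
  have w0: "w y \<ge> 0" for y using \<sigma>0[of y] vmeas_pos[of y] by (simp add: w_def)
  have target: "green mu p y powr q * (\<sigma> y * vmeas mu y) = w y" for y
  proof -
    have "green mu p y = h y" unfolding h_def h_eq by (simp add: green_sym[of p y])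
    then show ?thesis by (simp add: w_def algebra_simps)
  qed
  show ?thesis
  proof (cases "Y = {}")
    case True then show ?thesis using M0 by (simp add: M_def)
  next
    case False
    define t where "t = Min (h ` Y)"
    have tpos: "t > 0" unfolding t_def using Y False hpos by (subst Min_gr_iff) auto
    have tY: "y \<in> Y \<Longrightarrow> t \<le> h y" for y unfolding t_def using Y by (intro Min_le) auto
    define \<phi> where "\<phi> = (\<lambda>z. min 1 (h z / t))"
    have \<phi>0: "\<phi> z \<ge> 0" for z using hpos[of z] tpos by (simp add: \<phi>_def)
    have \<phi>Y: "y \<in> Y \<Longrightarrow> \<phi> y = 1" for y using tY[of y] tpos by (simp add: \<phi>_def)
    have \<phi>le1: "\<phi> z \<le> 1" for z by (simp add: \<phi>_def)
    have P\<phi>: "Pop mu \<phi> z \<le> \<phi> z" for z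
    proof -
      have "Pop mu \<phi> z \<le> Pop mu (\<lambda>_. 1) z" by (rule Pop_mono) (simp add: \<phi>_def)
      then have 1: "Pop mu \<phi> z \<le> 1" by (simp add: Pop_const)
      have "Pop mu \<phi> z \<le> Pop mu (\<lambda>y. (1 / t) * h y) z" by (rule Pop_mono) (simp add: \<phi>_def)
      also have "\<dots> = (1 / t) * Pop mu h z" by (rule Pop_scale)
      also have "\<dots> \<le> (1 / t) * h z" using tpos hsup[of z] by (intro mult_left_mono) auto
      finally show ?thesis using 1 by (simp add: \<phi>_def)
    qed
    define f where "f = (\<lambda>z. \<phi> z - Pop mu \<phi> z)"
    have f0: "f z \<ge> 0" for z using P\<phi>[of z] by (simp add: f_def)
    have tele: "(\<Sum>k<n. Piter mu k f y) + Piter mu n \<phi> y = \<phi> y" for n y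
      by (rule tele_eq) (simp add: f_def)
    have fsum: "(\<Sum>k<n. Piter mu k f y) \<le> \<phi> y" for n y
      by (rule tele_nonneg[OF _ \<phi>0]) (simp add: f_def)
    define \<epsilon> where "\<epsilon> = (\<lambda>n y. ((1 / t) * (1 / vmeas mu p)) * Piter mu n (\<lambda>z. gs mu z p) y)"
    have eps: "Piter mu n \<phi> y \<le> \<epsilon> n y" for n y
    proof -
      have "Piter mu n \<phi> y \<le> Piter mu n (\<lambda>z. ((1 / t) * (1 / vmeas mu p)) * gs mu z p) y"
        by (rule Piter_mono) (simp add: \<phi>_def h_def mult.commute)
      then show ?thesis unfolding \<epsilon>_def Piter_scale .
    qed
    have eps_lim: "(\<lambda>n. \<epsilon> n y) \<longlonglongrightarrow> 0" for y
      unfolding \<epsilon>_def by (rule tendsto_mult_right_zero[OF Piter_gs_lim])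
    have main: "(\<Sum>y\<in>Y. (\<Sum>k<n. Piter mu k f y) * w y) \<le> M" for n
    proof -
      define S where "S = (\<Union>y\<in>Y. \<Union>k\<in>{..<n}. reach mu k y)"
      have S: "finite S" unfolding S_def using Y by (auto simp: finite_reach)
      have RS: "y \<in> Y \<Longrightarrow> k < n \<Longrightarrow> reach mu k y \<subseteq> S" for y k unfolding S_def by auto
      have "(\<Sum>y\<in>Y. (\<Sum>k<n. Piter mu k f y) * w y)
          = (\<Sum>y\<in>Y. \<Sum>k<n. \<Sum>x\<in>S. nstep mu k y x * f x * w y)"
      proof (rule sum.cong[OF refl])
        fix y assume y: "y \<in> Y"
        have "(\<Sum>k<n. Piter mu k f y) = (\<Sum>k<n. \<Sum>x\<in>S. nstep mu k y x * f x)"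
          by (intro sum.cong refl Piter_superset[OF S] RS[OF y]) simp
        then show "(\<Sum>k<n. Piter mu k f y) * w y = (\<Sum>k<n. \<Sum>x\<in>S. nstep mu k y x * f x * w y)"
          by (simp add: sum_distrib_right)
      qed
      also have "\<dots> = (\<Sum>k<n. \<Sum>y\<in>Y. \<Sum>x\<in>S. nstep mu k y x * f x * w y)"
        by (rule sum.swap)
      also have "\<dots> = (\<Sum>k<n. \<Sum>x\<in>S. \<Sum>y\<in>Y. nstep mu k y x * f x * w y)"
        by (intro sum.cong refl sum.swap)
      also have "\<dots> = (\<Sum>x\<in>S. \<Sum>k<n. \<Sum>y\<in>Y. nstep mu k y x * f x * w y)"
        by (rule sum.swap)
      also have "\<dots> = (\<Sum>x\<in>S. (f x * vmeas mu x) * (\<Sum>k<n. \<Sum>y\<in>Y. nstep mu k x y * (\<sigma> y * h y powr q)))"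
      proof (rule sum.cong[OF refl])
        fix x
        have eqk: "nstep mu k y x * f x * w y = (f x * vmeas mu x) * (nstep mu k x y * (\<sigma> y * h y powr q))" for k y
        proof -
          have "nstep mu k y x * f x * w y = (vmeas mu y * nstep mu k y x) * f x * (\<sigma> y * h y powr q)"
            by (simp add: w_def algebra_simps)
          also have "\<dots> = (vmeas mu x * nstep mu k x y) * f x * (\<sigma> y * h y powr q)"
            by (simp add: reversible[of y k x])
          finally show ?thesis by (simp add: algebra_simps)
        qed
        then show "(\<Sum>k<n. \<Sum>y\<in>Y. nstep mu k y x * f x * w y) = (f x * vmeas mu x) * (\<Sum>k<n. \<Sum>y\<in>Y. nstep mu k x y * (\<sigma> y * h y powr q))"
          by (simp only: sum_distrib_left eqk)
      qed
      also have "\<dots> \<le> (\<Sum>x\<in>S. (f x * vmeas mu x) * (h x * M))"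
      proof (rule sum_mono)
        fix x
        have "(\<Sum>k<n. \<Sum>y\<in>Y. nstep mu k x y * (\<sigma> y * h y powr q)) \<le> (\<Sum>k<n. Piter mu k (\<lambda>y. \<sigma> y * h y powr q) x)"
          using Y \<sigma>0 by (intro sum_mono Piter_ge) auto
        also have "\<dots> \<le> h x * M" by (rule W)
        finally show "(f x * vmeas mu x) * (\<Sum>k<n. \<Sum>y\<in>Y. nstep mu k x y * (\<sigma> y * h y powr q)) \<le> (f x * vmeas mu x) * (h x * M)"
          using f0[of x] vmeas_pos[of x] by (intro mult_left_mono) auto
      qed
      also have "\<dots> = M * (\<Sum>x\<in>S. f x * gs mu p x)"
      proof -
        have "vmeas mu x * h x = gs mu p x" for x
          using gs_rev[of x p] vmeas_pos[of p] by (simp add: h_def field_simps)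
        then show ?thesis by (simp add: sum_distrib_left algebra_simps)
      qed
      also have "\<dots> \<le> M * 1"
      proof (rule mult_left_mono[OF _ M0])
        have "(\<Sum>x\<in>S. f x * gs mu p x) = (\<Sum>x\<in>S. \<Sum>j. nstep mu j p x * f x)"
          unfolding gs_def by (intro sum.cong refl) (simp add: suminf_mult[OF summable_nstep] mult.commute)
        also have "\<dots> = (\<Sum>j. \<Sum>x\<in>S. nstep mu j p x * f x)"
          by (rule suminf_sum[symmetric]) (intro summable_mult2 summable_nstep)
        also have "\<dots> \<le> 1"
        proof (rule suminf_le_const)
          show "summable (\<lambda>j. \<Sum>x\<in>S. nstep mu j p x * f x)"
            by (intro summable_sum summable_mult2 summable_nstep)
          fix N
          have "(\<Sum>j<N. \<Sum>x\<in>S. nstep mu j p x * f x) \<le> (\<Sum>j<N. Piter mu j f p)"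
            using S f0 by (intro sum_mono Piter_ge) auto
          also have "\<dots> \<le> \<phi> p" by (rule fsum)
          also have "\<dots> \<le> 1" by (rule \<phi>le1)
          finally show "(\<Sum>j<N. \<Sum>x\<in>S. nstep mu j p x * f x) \<le> 1" .
        qed
        finally show "(\<Sum>x\<in>S. f x * gs mu p x) \<le> 1" .
      qed
      finally show ?thesis by simp
    qed
    have bound: "(\<Sum>y\<in>Y. w y) \<le> M + (\<Sum>y\<in>Y. \<epsilon> n y * w y)" for n
    proof -
      have "(\<Sum>y\<in>Y. w y) = (\<Sum>y\<in>Y. ((\<Sum>k<n. Piter mu k f y) + Piter mu n \<phi> y) * w y)"
        using \<phi>Y tele by (intro sum.cong) auto
      also have "\<dots> = (\<Sum>y\<in>Y. (\<Sum>k<n. Piter mu k f y) * w y) + (\<Sum>y\<in>Y. Piter mu n \<phi> y * w y)"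
        by (simp add: distrib_right sum.distrib)
      also have "\<dots> \<le> M + (\<Sum>y\<in>Y. \<epsilon> n y * w y)"
        using main[of n] eps w0 by (intro add_mono sum_mono mult_right_mono) auto
      finally show ?thesis .
    qed
    have lim: "(\<lambda>n. M + (\<Sum>y\<in>Y. \<epsilon> n y * w y)) \<longlonglongrightarrow> M + (\<Sum>y\<in>Y. 0 * w y)"
      by (intro tendsto_intros eps_lim)
    have "(\<Sum>y\<in>Y. w y) \<le> M"
      using LIMSEQ_le_const[OF lim, of "\<Sum>y\<in>Y. w y"] bound by simp
    then show ?thesis using target by (simp add: M_def)
  qed
qed

end

lemma threeG_pt:
  fixes a b m \<kappa> q :: real
  assumes a: "a > 0" and b: "b > 0" and m: "m > 0" and k: "\<kappa> \<ge> 1" and q: "q > 1"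
    and h1: "1 / b \<le> \<kappa> * (1 / a + 1 / m)" and h2: "1 / m \<le> \<kappa> * (1 / a + 1 / b)"
  shows "a * b powr q \<le> 2 * \<kappa> * m * (b powr q + (if b > m / (2 * \<kappa>) then (2 * \<kappa> * m) powr (q - 1) * a else 0))"
proof -
  have bq: "b powr q = b * b powr (q - 1)" using b pm1[OF b, of "1 - q"] by (simp add: mult.commute)
  have bq0: "b powr q > 0" "b powr (q - 1) > 0" using b by auto
  have k0: "2 * \<kappa> * m > 0" using k m by simp
  define X where "X = (if b > m / (2 * \<kappa>) then (2 * \<kappa> * m) powr (q - 1) * a else 0)"
  have ifnn: "X \<ge> 0" using a by (auto simp: X_def)
  have fin: "a * b powr q \<le> 2 * \<kappa> * m * (b powr q + X)" if "a \<le> 2 * \<kappa> * m"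
  proof -
    have "a * b powr q \<le> (2 * \<kappa> * m) * b powr q" using that bq0 by (intro mult_right_mono) auto
    also have "\<dots> \<le> (2 * \<kappa> * m) * (b powr q + X)" using ifnn k0 by (intro mult_left_mono) auto
    finally show ?thesis .
  qed
  have ab: "a * b \<le> \<kappa> * m * (a + b)"
  proof -
    have "a * b \<le> \<kappa> * (a * m) + \<kappa> * (b * m)" using h2 a b m by (simp add: field_simps)
    then show ?thesis by (simp add: algebra_simps)
  qed
  have main: "a * b powr q \<le> 2 * \<kappa> * m * (b powr q + X)"
  proof (cases "b > m / (2 * \<kappa>)")
    case False
    then have bm: "2 * \<kappa> * b \<le> m" using k by (simp add: field_simps)
    have "\<kappa> / m \<le> (1 / b) / 2" using bm b m k by (simp add: field_simps)
    moreover have "1 / b \<le> \<kappa> / a + \<kappa> / m" using h1 by (simp add: algebra_simps)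
    ultimately have "(1 / b) / 2 \<le> \<kappa> / a" by linarith
    then have ab2: "a \<le> 2 * \<kappa> * b" using a b k by (simp add: field_simps)
    have "2 * \<kappa> * b \<le> 2 * \<kappa> * (2 * \<kappa> * b)"
      using k b by (intro mult_left_mono) auto
    then have "2 * \<kappa> * b \<le> 2 * \<kappa> * m"
      using bm k by (meson order_trans mult_left_mono mult_nonneg_nonneg zero_le_numeral less_imp_le order.trans zero_less_one le_less_trans)
    then show ?thesis using ab2 fin by linarith
  next
    case True
    show ?thesis
    proof (cases "a \<le> b")
      case True
      have "\<kappa> * m * (a + b) \<le> \<kappa> * m * (b + b)" using True k m by (intro mult_left_mono) auto
      then have "a * b \<le> (2 * \<kappa> * m) * b" using ab by (simp add: algebra_simps)
      then have "a \<le> 2 * \<kappa> * m" using b by simp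
      then show ?thesis by (rule fin)
    next
      case False
      have "\<kappa> * m * (a + b) \<le> \<kappa> * m * (a + a)" using False k m by (intro mult_left_mono) auto
      then have "b * a \<le> (2 * \<kappa> * m) * a" using ab by (simp add: algebra_simps)
      then have b2: "b \<le> 2 * \<kappa> * m" using a by simp
      have bpl: "b powr (q - 1) \<le> (2 * \<kappa> * m) powr (q - 1)" using b2 b q by (intro powr_mono2) auto
      have "a * b powr q = (a * b) * b powr (q - 1)" by (simp add: bq)
      also have "\<dots> \<le> (2 * \<kappa> * m * a) * b powr (q - 1)"
        using \<open>b * a \<le> _\<close> bq0 by (intro mult_right_mono) (auto simp: mult.commute)
      also have "\<dots> \<le> (2 * \<kappa> * m * a) * (2 * \<kappa> * m) powr (q - 1)"
        using bpl a k0 by (intro mult_left_mono) auto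
      also have "\<dots> = 2 * \<kappa> * m * ((2 * \<kappa> * m) powr (q - 1) * a)" by simp
      also have "\<dots> \<le> 2 * \<kappa> * m * (b powr q + (2 * \<kappa> * m) powr (q - 1) * a)"
        using bq0 k0 by (intro mult_left_mono) auto
      finally show ?thesis using \<open>b > m / (2 * \<kappa>)\<close> by (simp add: X_def)
    qed
  qed
  then show ?thesis by (simp add: X_def)
qed

lemma infsum_sum_fin:
  fixes g :: "'i \<Rightarrow> 'b \<Rightarrow> real"
  assumes "finite I" "\<And>i. i \<in> I \<Longrightarrow> g i summable_on A"
  shows "(\<lambda>y. \<Sum>i\<in>I. g i y) summable_on A \<and> infsum (\<lambda>y. \<Sum>i\<in>I. g i y) A = (\<Sum>i\<in>I. infsum (g i) A)"
  using assms
proof (induction I rule: finite_induct)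
  case empty then show ?case by simp
next
  case (insert i I)
  then have s1: "g i summable_on A" and s2: "(\<lambda>y. \<Sum>i\<in>I. g i y) summable_on A"
    and e2: "infsum (\<lambda>y. \<Sum>i\<in>I. g i y) A = (\<Sum>i\<in>I. infsum (g i) A)" by auto
  show ?case using insert(1,2) summable_on_add[OF s1 s2] infsum_add[OF s1 s2] e2 by simp
qed

context wgn begin

lemma gs_le_diag: "gs mu x p \<le> gs mu p p"
proof -
  define \<psi> where "\<psi> = (\<lambda>z. min (gs mu z p) (gs mu p p))"
  define f where "f = (\<lambda>z. if z = p then 1 else (0::real))"
  have \<psi>0: "\<psi> z \<ge> 0" for z using gs_nonneg by (simp add: \<psi>_def)
  have st: "Pop mu \<psi> z + f z \<le> \<psi> z" for z
  proof -
    have 1: "Pop mu \<psi> z \<le> gs mu z p - (if z = p then 1 else 0)"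
      using Pop_mono[of \<psi> "\<lambda>z. gs mu z p" z] Pop_gs[of p z] by (simp add: \<psi>_def)
    have 2: "Pop mu \<psi> z \<le> gs mu p p"
      using Pop_mono[of \<psi> "\<lambda>_. gs mu p p" z] by (simp add: \<psi>_def Pop_const)
    show ?thesis using 1 2 by (cases "z = p") (auto simp: \<psi>_def f_def)
  qed
  have "(\<Sum>k<n. nstep mu k x p) \<le> gs mu p p" for n
  proof -
    have "(\<Sum>k<n. nstep mu k x p) \<le> (\<Sum>k<n. Piter mu k f x)"
      using Piter_ge[of "{p}" f _ x] by (intro sum_mono) (auto simp: f_def)
    also have "\<dots> \<le> \<psi> x" by (rule tele_nonneg[OF st \<psi>0])
    also have "\<dots> \<le> gs mu p p" by (simp add: \<psi>_def)
    finally show ?thesis .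
  qed
  then show ?thesis unfolding gs_def by (intro suminf_le_const summable_nstep)
qed

lemma green_le_diag: "green mu x p \<le> green mu p p"
  using gs_le_diag[of x p] vmeas_pos[of p] by (simp add: green_eq divide_right_mono)

lemma Pop_potential:
  assumes s: "\<And>x. (\<lambda>y. gs mu x y * f y) summable_on UNIV"
  shows "Pop mu (\<lambda>x. infsum (\<lambda>y. gs mu x y * f y) UNIV) x + f x = infsum (\<lambda>y. gs mu x y * f y) UNIV"
proof -
  define g where "g = (\<lambda>z y. trans_prob mu x z * (gs mu z y * f y))"
  have sg: "g z summable_on UNIV" for z unfolding g_def by (intro summable_on_cmult_right s)
  have A: "Pop mu (\<lambda>x. infsum (\<lambda>y. gs mu x y * f y) UNIV) x = (\<Sum>z\<in>nbrs mu x. infsum (g z) UNIV)"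
    unfolding Pop_def g_def by (intro sum.cong refl infsum_cmult_right[symmetric] s)
  have B: "(\<lambda>y. \<Sum>z\<in>nbrs mu x. g z y) summable_on UNIV \<and> infsum (\<lambda>y. \<Sum>z\<in>nbrs mu x. g z y) UNIV = (\<Sum>z\<in>nbrs mu x. infsum (g z) UNIV)"
    by (rule infsum_sum_fin[OF fin_N sg])
  define d where "d = (\<lambda>y. if y = x then f x else 0)"
  have sd: "d summable_on UNIV"
    by (rule summable_on_cong_neutral[where S = "{x}", THEN iffD1]) (auto simp: d_def)
  have id: "infsum d UNIV = f x"
  proof -
    have "infsum d UNIV = infsum d {x}"
      by (rule infsum_cong_neutral) (auto simp: d_def)
    then show ?thesis by (simp add: d_def)
  qed
  have pt: "(\<Sum>z\<in>nbrs mu x. g z y) + d y = gs mu x y * f y" for y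
  proof -
    have "(\<Sum>z\<in>nbrs mu x. g z y) = (\<Sum>z\<in>nbrs mu x. trans_prob mu x z * gs mu z y) * f y"
      by (simp add: g_def sum_distrib_right mult.assoc)
    also have "\<dots> = (gs mu x y - (if x = y then 1 else 0)) * f y" by (simp add: gs_step)
    finally show ?thesis by (auto simp: d_def algebra_simps)
  qed
  have "infsum (\<lambda>y. gs mu x y * f y) UNIV = infsum (\<lambda>y. (\<Sum>z\<in>nbrs mu x. g z y) + d y) UNIV"
    by (simp add: pt)
  also have "\<dots> = infsum (\<lambda>y. \<Sum>z\<in>nbrs mu x. g z y) UNIV + infsum d UNIV"
    using B sd by (intro infsum_add) auto
  finally show ?thesis using A B id by simp
qed

end

lemma lambda_exists:
  fixes Cs q :: real
  assumes Cs: "Cs > 0" and q: "q > 1"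
  shows "\<exists>l>0. (2 * l) powr q * Cs = l"
proof -
  define B where "B = 2 powr q * Cs"
  have B: "B > 0" using Cs by (simp add: B_def)
  define l where "l = B powr (- 1 / (q - 1))"
  have l: "l > 0" using B by (simp add: l_def)
  have l1: "l powr (q - 1) = 1 / B"
  proof -
    have "l powr (q - 1) = B powr (- 1 / (q - 1) * (q - 1))" by (simp add: l_def powr_powr)
    also have "- 1 / (q - 1) * (q - 1) = - 1" using q by simp
    also have "B powr (- 1) = 1 / B" using B by (simp add: powr_minus_divide)
    finally show ?thesis .
  qed
  have lq: "l powr q = l powr (q - 1) * l"
  proof -
    have "l powr q = l powr ((q - 1) + 1)" by simp
    also have "\<dots> = l powr (q - 1) * l powr 1" by (rule powr_add)
    finally show ?thesis using l by simp
  qed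
  have "(2 * l) powr q * Cs = 2 powr q * Cs * l powr q"
    using l by (simp add: powr_mult)
  also have "\<dots> = B * (1 / B) * l" by (simp add: B_def lq l1)
  also have "\<dots> = l" using B by simp
  finally show ?thesis using l by blast
qed

context wgn begin

lemma K_bound:
  fixes \<sigma> :: "'a \<Rightarrow> real"
  assumes q: "q > 1" and \<sigma>0: "\<And>x. \<sigma> x \<ge> 0" and k: "\<kappa> \<ge> 1"
    and tg: "\<And>x y z. 1 / green mu x y \<le> \<kappa> * (1 / green mu x z + 1 / green mu z y)"
    and si: "(\<lambda>y. green mu p y powr q * (\<sigma> y * vmeas mu y)) summable_on UNIV"
    and r0: "r0 > 0" and C: "C > 0"
    and sii: "\<And>r x. r > r0 \<Longrightarrow> (\<lambda>y. green mu x y * (\<sigma> y * vmeas mu y)) summable_on {y. green mu p y > 1 / r} \<and>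
             (\<Sum>\<^sub>\<infinity>y\<in>{y. green mu p y > 1 / r}. green mu x y * (\<sigma> y * vmeas mu y)) \<le> C * r powr (q - 1)"
  shows "(\<lambda>y. green mu x y * green mu y p powr q * (\<sigma> y * vmeas mu y)) summable_on UNIV \<and>
         infsum (\<lambda>y. green mu x y * green mu y p powr q * (\<sigma> y * vmeas mu y)) UNIV
           \<le> (2 * \<kappa> * (infsum (\<lambda>y. green mu p y powr q * (\<sigma> y * vmeas mu y)) UNIV
                + C * (4 * \<kappa> * \<kappa>) powr (q - 1)
                + (2 * \<kappa> * green mu p p) powr (q - 1) * (C * (r0 + 1) powr (q - 1)))) * green mu x p"
proof (rule bounded_summable_on)
  define \<nu> where "\<nu> = (\<lambda>y. \<sigma> y * vmeas mu y)"
  have \<nu>0: "\<nu> y \<ge> 0" for y using \<sigma>0[of y] vmeas_pos[of y] by (simp add: \<nu>_def)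
  define m where "m = green mu x p"
  have m: "m > 0" by (simp add: m_def green_pos)
  define S where "S = infsum (\<lambda>y. green mu p y powr q * \<nu> y) UNIV"
  define D where "D = C * (4 * \<kappa> * \<kappa>) powr (q - 1) + (2 * \<kappa> * green mu p p) powr (q - 1) * (C * (r0 + 1) powr (q - 1))"
  define E where "E = {y. green mu p y > m / (2 * \<kappa>)}"
  have k0: "2 * \<kappa> * m > 0" using k m by simp
  show "\<And>y. y \<in> UNIV \<Longrightarrow> green mu x y * green mu y p powr q * (\<sigma> y * vmeas mu y) \<ge> 0"
    using \<nu>0 green_pos by (simp add: \<nu>_def less_imp_le)
  fix F :: "'a set" assume F: "finite F" "F \<subseteq> UNIV"
  have pt: "green mu x y * green mu p y powr q * \<nu> y \<le>
            2 * \<kappa> * m * (green mu p y powr q * \<nu> y + (if y \<in> E then (2 * \<kappa> * m) powr (q - 1) * (green mu x y * \<nu> y) else 0))" for y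
  proof -
    have h1: "1 / green mu p y \<le> \<kappa> * (1 / green mu x y + 1 / m)"
      using tg[of y p x] by (simp add: green_sym[of y p] green_sym[of y x] m_def)
    have h2: "1 / m \<le> \<kappa> * (1 / green mu x y + 1 / green mu p y)"
      using tg[of x p y] by (simp add: green_sym[of y p] m_def)
    have "green mu x y * green mu p y powr q \<le> 2 * \<kappa> * m * (green mu p y powr q + (if green mu p y > m / (2 * \<kappa>) then (2 * \<kappa> * m) powr (q - 1) * green mu x y else 0))"
      by (rule threeG_pt[OF green_pos green_pos m k q h1 h2])
    then have "green mu x y * green mu p y powr q * \<nu> y \<le> 2 * \<kappa> * m * (green mu p y powr q + (if green mu p y > m / (2 * \<kappa>) then (2 * \<kappa> * m) powr (q - 1) * green mu x y else 0)) * \<nu> y"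
      using \<nu>0[of y] by (intro mult_right_mono) auto
    then show ?thesis by (simp add: E_def algebra_simps split: if_splits)
  qed
  have "(\<Sum>y\<in>F. green mu x y * green mu y p powr q * (\<sigma> y * vmeas mu y))
      = (\<Sum>y\<in>F. green mu x y * green mu p y powr q * \<nu> y)"
    by (simp add: \<nu>_def green_sym[of _ p])
  also have "\<dots> \<le> (\<Sum>y\<in>F. 2 * \<kappa> * m * (green mu p y powr q * \<nu> y + (if y \<in> E then (2 * \<kappa> * m) powr (q - 1) * (green mu x y * \<nu> y) else 0)))"
    by (intro sum_mono pt)
  also have "\<dots> = 2 * \<kappa> * m * ((\<Sum>y\<in>F. green mu p y powr q * \<nu> y) + (2 * \<kappa> * m) powr (q - 1) * (\<Sum>y\<in>F \<inter> E. green mu x y * \<nu> y))"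
  proof -
    have ir: "(\<Sum>y\<in>F. (if y \<in> E then (2 * \<kappa> * m) powr (q - 1) * (green mu x y * \<nu> y) else 0))
        = (2 * \<kappa> * m) powr (q - 1) * (\<Sum>y\<in>F \<inter> E. green mu x y * \<nu> y)"
      using F(1) by (simp add: sum.inter_restrict sum_distrib_left if_distrib cong: if_cong)
    show ?thesis by (simp only: sum_distrib_left[symmetric] sum.distrib ir)
  qed
  also have "\<dots> \<le> 2 * \<kappa> * m * (S + D)"
  proof (intro mult_left_mono add_mono)
    show "(\<Sum>y\<in>F. green mu p y powr q * \<nu> y) \<le> S"
      unfolding S_def using si F \<nu>0 by (intro finite_sum_le_infsum) (auto simp: \<nu>_def)
    show "(2 * \<kappa> * m) powr (q - 1) * (\<Sum>y\<in>F \<inter> E. green mu x y * \<nu> y) \<le> D"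
    proof (cases "2 * \<kappa> / m > r0")
      case True
      define r where "r = 2 * \<kappa> / m"
      have r: "r > r0" "r > 0" using True r0 by (auto simp: r_def)
      have Er: "E = {y. green mu p y > 1 / r}" using k m by (simp add: E_def r_def)
      obtain s1 s2 where "(\<lambda>y. green mu x y * \<nu> y) summable_on E" "infsum (\<lambda>y. green mu x y * \<nu> y) E \<le> C * r powr (q - 1)"
        using sii[OF r(1), of x] Er by (simp add: \<nu>_def)
      then have "(\<Sum>y\<in>F \<inter> E. green mu x y * \<nu> y) \<le> C * r powr (q - 1)"
        using F(1) \<nu>0 green_pos by (smt (verit) Int_lower2 finite_Int finite_sum_le_infsum less_imp_le mult_nonneg_nonneg)
      then have "(2 * \<kappa> * m) powr (q - 1) * (\<Sum>y\<in>F \<inter> E. green mu x y * \<nu> y) \<le> (2 * \<kappa> * m) powr (q - 1) * (C * r powr (q - 1))"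
        by (intro mult_left_mono) auto
      also have "\<dots> = C * ((2 * \<kappa> * m) * r) powr (q - 1)"
        using k0 r by (simp add: powr_mult)
      also have "(2 * \<kappa> * m) * r = 4 * \<kappa> * \<kappa>" using m by (simp add: r_def)
      finally have "(2 * \<kappa> * m) powr (q - 1) * (\<Sum>y\<in>F \<inter> E. green mu x y * \<nu> y) \<le> C * (4 * \<kappa> * \<kappa>) powr (q - 1)" .
      moreover have "(2 * \<kappa> * green mu p p) powr (q - 1) * (C * (r0 + 1) powr (q - 1)) \<ge> 0"
        using C by simp
      ultimately show ?thesis by (simp add: D_def)
    next
      case False
      have r: "r0 + 1 > r0" by simp
      have sub: "F \<inter> E \<subseteq> {y. green mu p y > 1 / (r0 + 1)}"
      proof
        fix y assume "y \<in> F \<inter> E"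
        then have y: "green mu p y > m / (2 * \<kappa>)" by (simp add: E_def)
        have "2 * \<kappa> \<le> r0 * m" using False m by (simp add: field_simps)
        then have "1 / r0 \<le> m / (2 * \<kappa>)" using r0 k by (simp add: field_simps)
        moreover have "1 / (r0 + 1) < 1 / r0" using r0 by (simp add: field_simps)
        ultimately show "y \<in> {y. green mu p y > 1 / (r0 + 1)}" using y by simp
      qed
      have s: "(\<lambda>y. green mu x y * \<nu> y) summable_on {y. green mu p y > 1 / (r0 + 1)}"
        and i: "infsum (\<lambda>y. green mu x y * \<nu> y) {y. green mu p y > 1 / (r0 + 1)} \<le> C * (r0 + 1) powr (q - 1)"
        using sii[OF r, of x] by (simp_all add: \<nu>_def)
      have "(\<Sum>y\<in>F \<inter> E. green mu x y * \<nu> y) \<le> infsum (\<lambda>y. green mu x y * \<nu> y) {y. green mu p y > 1 / (r0 + 1)}"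
      proof (rule finite_sum_le_infsum[OF s])
        show "finite (F \<inter> E)" using F(1) by simp
        show "F \<inter> E \<subseteq> {y. green mu p y > 1 / (r0 + 1)}" by (rule sub)
        fix y show "green mu x y * \<nu> y \<ge> 0" using \<nu>0[of y] green_pos[of x y] by simp
      qed
      then have A: "(\<Sum>y\<in>F \<inter> E. green mu x y * \<nu> y) \<le> C * (r0 + 1) powr (q - 1)" using i by simp
      have A0: "(\<Sum>y\<in>F \<inter> E. green mu x y * \<nu> y) \<ge> 0"
        using \<nu>0 green_pos by (intro sum_nonneg) (simp add: less_imp_le)
      have "m \<le> green mu p p" unfolding m_def by (rule green_le_diag)
      then have B: "(2 * \<kappa> * m) powr (q - 1) \<le> (2 * \<kappa> * green mu p p) powr (q - 1)"
        using k0 q k by (intro powr_mono2) auto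
      have "(2 * \<kappa> * m) powr (q - 1) * (\<Sum>y\<in>F \<inter> E. green mu x y * \<nu> y) \<le> (2 * \<kappa> * green mu p p) powr (q - 1) * (C * (r0 + 1) powr (q - 1))"
        using A A0 B by (intro mult_mono) auto
      moreover have "C * (4 * \<kappa> * \<kappa>) powr (q - 1) \<ge> 0" using C by simp
      ultimately show ?thesis by (simp add: D_def)
    qed
    show "0 \<le> 2 * \<kappa> * m" using k0 by simp
  qed
  finally show "(\<Sum>y\<in>F. green mu x y * green mu y p powr q * (\<sigma> y * vmeas mu y))
     \<le> (2 * \<kappa> * (infsum (\<lambda>y. green mu p y powr q * (\<sigma> y * vmeas mu y)) UNIV
                + C * (4 * \<kappa> * \<kappa>) powr (q - 1)
                + (2 * \<kappa> * green mu p p) powr (q - 1) * (C * (r0 + 1) powr (q - 1)))) * green mu x p"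
    by (simp add: S_def D_def \<nu>_def m_def algebra_simps)
qed

end

context wgn begin

lemma forward:
  fixes \<sigma> :: "'a \<Rightarrow> real"
  assumes q: "q > 1" and \<sigma>0: "\<And>x. \<sigma> x \<ge> 0" and hs: "has_pos_solution mu \<sigma> q" and sp: "\<sigma> p > 0"
  shows "(\<lambda>y. green mu p y powr q * (\<sigma> y * vmeas mu y)) summable_on UNIV \<and>
    (\<exists>r0>0. \<exists>C>0. \<forall>r>r0. \<forall>x.
       (\<lambda>y. green mu x y * (\<sigma> y * vmeas mu y)) summable_on {y. green mu p y > 1 / r} \<and>
       (\<Sum>\<^sub>\<infinity>y\<in>{y. green mu p y > 1 / r}. green mu x y * (\<sigma> y * vmeas mu y)) \<le> C * r powr (q - 1))"
proof -
  obtain u where upos: "\<And>x. u x > 0" and us: "\<And>x. - laplacian mu u x \<ge> \<sigma> x * u x powr q"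
    using hs unfolding has_pos_solution_def by blast
  have sol: "Pop mu u x + \<sigma> x * u x powr q \<le> u x" for x by (rule sol_Pop[OF us])
  define c0 where "c0 = vmeas mu p * \<sigma> p * u p powr q"
  have c0: "c0 > 0" using vmeas_pos[of p] sp upos[of p] by (simp add: c0_def)
  have ulow: "c0 * ((1 / vmeas mu p) * gs mu x p) \<le> u x" for x
    unfolding c0_def by (rule lower_bound[OF q \<sigma>0 sp upos sol])
  have i: "(\<lambda>y. green mu p y powr q * (\<sigma> y * vmeas mu y)) summable_on UNIV"
  proof -
    have "(\<lambda>y. green mu p y powr q * (\<sigma> y * vmeas mu y)) summable_on UNIV \<and>
          infsum (\<lambda>y. green mu p y powr q * (\<sigma> y * vmeas mu y)) UNIV \<le> q * c0 powr (1 - q) / (q - 1)"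
    proof (rule bounded_summable_on)
      show "\<And>y. y \<in> UNIV \<Longrightarrow> green mu p y powr q * (\<sigma> y * vmeas mu y) \<ge> 0"
        using \<sigma>0 vmeas_pos by (simp add: less_imp_le)
      show "\<And>F. finite F \<Longrightarrow> F \<subseteq> UNIV \<Longrightarrow> (\<Sum>y\<in>F. green mu p y powr q * (\<sigma> y * vmeas mu y)) \<le> q * c0 powr (1 - q) / (q - 1)"
        by (rule forward_i_fin[OF q \<sigma>0 c0 ulow sol])
    qed
    then show ?thesis by blast
  qed
  have ii: "\<forall>r>1. \<forall>x.
       (\<lambda>y. green mu x y * (\<sigma> y * vmeas mu y)) summable_on {y. green mu p y > 1 / r} \<and>
       (\<Sum>\<^sub>\<infinity>y\<in>{y. green mu p y > 1 / r}. green mu x y * (\<sigma> y * vmeas mu y)) \<le> (q * c0 powr (1 - q) / (q - 1)) * r powr (q - 1)"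
    using forward_ii[OF q \<sigma>0 c0 ulow sol] by simp
  have C: "q * c0 powr (1 - q) / (q - 1) > 0" using q c0 by simp
  have "\<exists>C>0. \<forall>r>1. \<forall>x.
       (\<lambda>y. green mu x y * (\<sigma> y * vmeas mu y)) summable_on {y. green mu p y > 1 / r} \<and>
       (\<Sum>\<^sub>\<infinity>y\<in>{y. green mu p y > 1 / r}. green mu x y * (\<sigma> y * vmeas mu y)) \<le> C * r powr (q - 1)"
    using ii C by blast
  then have "\<exists>r0>0. \<exists>C>0. \<forall>r>r0. \<forall>x.
       (\<lambda>y. green mu x y * (\<sigma> y * vmeas mu y)) summable_on {y. green mu p y > 1 / r} \<and>
       (\<Sum>\<^sub>\<infinity>y\<in>{y. green mu p y > 1 / r}. green mu x y * (\<sigma> y * vmeas mu y)) \<le> C * r powr (q - 1)"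
    by (intro exI[of _ "1::real"]) auto
  then show ?thesis using i by blast
qed

lemma converse:
  fixes \<sigma> :: "'a \<Rightarrow> real"
  assumes q: "q > 1" and \<sigma>0: "\<And>x. \<sigma> x \<ge> 0" and t3: "three_G mu"
    and si: "(\<lambda>y. green mu p y powr q * (\<sigma> y * vmeas mu y)) summable_on UNIV"
    and sii: "\<exists>r0>0. \<exists>C>0. \<forall>r>r0. \<forall>x.
       (\<lambda>y. green mu x y * (\<sigma> y * vmeas mu y)) summable_on {y. green mu p y > 1 / r} \<and>
       (\<Sum>\<^sub>\<infinity>y\<in>{y. green mu p y > 1 / r}. green mu x y * (\<sigma> y * vmeas mu y)) \<le> C * r powr (q - 1)"
  shows "has_pos_solution mu \<sigma> q"
proof -
  obtain \<kappa> where k: "\<kappa> \<ge> 1" and tg: "\<And>x y z. 1 / green mu x y \<le> \<kappa> * (1 / green mu x z + 1 / green mu z y)"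
    using t3 unfolding three_G_def by blast
  obtain r0 C where r0: "r0 > 0" and C: "C > 0" and sii': "\<And>r x. r > r0 \<Longrightarrow>
       (\<lambda>y. green mu x y * (\<sigma> y * vmeas mu y)) summable_on {y. green mu p y > 1 / r} \<and>
       (\<Sum>\<^sub>\<infinity>y\<in>{y. green mu p y > 1 / r}. green mu x y * (\<sigma> y * vmeas mu y)) \<le> C * r powr (q - 1)"
    using sii by blast
  define Cs where "Cs = 2 * \<kappa> * (infsum (\<lambda>y. green mu p y powr q * (\<sigma> y * vmeas mu y)) UNIV
                + C * (4 * \<kappa> * \<kappa>) powr (q - 1)
                + (2 * \<kappa> * green mu p p) powr (q - 1) * (C * (r0 + 1) powr (q - 1)))"
  have Cs: "Cs > 0"
  proof -
    have "infsum (\<lambda>y. green mu p y powr q * (\<sigma> y * vmeas mu y)) UNIV \<ge> 0"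
      using \<sigma>0 vmeas_pos by (intro infsum_nonneg) (simp add: less_imp_le)
    moreover have "C * (4 * \<kappa> * \<kappa>) powr (q - 1) > 0" using C k by simp
    moreover have "(2 * \<kappa> * green mu p p) powr (q - 1) * (C * (r0 + 1) powr (q - 1)) \<ge> 0" using C by simp
    ultimately show ?thesis using k unfolding Cs_def by (intro mult_pos_pos) auto
  qed
  obtain l where l: "l > 0" and lC: "(2 * l) powr q * Cs = l" using lambda_exists[OF Cs q] by blast
  define h where "h = (\<lambda>z. green mu z p)"
  have hpos: "h z > 0" for z by (simp add: h_def green_pos)
  have h_alt: "h = (\<lambda>z. (1 / vmeas mu p) * gs mu z p)" unfolding h_def by (simp add: green_eq fun_eq_iff)
  have hsup: "Pop mu h z \<le> h z" for z unfolding h_alt by (rule h_sup)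
  define f where "f = (\<lambda>y. \<sigma> y * h y powr q)"
  have f0: "f y \<ge> 0" for y using \<sigma>0[of y] by (simp add: f_def)
  have pteq: "gs mu x y * f y = green mu x y * green mu y p powr q * (\<sigma> y * vmeas mu y)" for x y
    using vmeas_pos[of y] by (simp add: f_def h_def green_eq)
  have KB: "(\<lambda>y. gs mu x y * f y) summable_on UNIV \<and> infsum (\<lambda>y. gs mu x y * f y) UNIV \<le> Cs * h x" for x
    using K_bound[OF q \<sigma>0 k tg si r0 C sii', of x] unfolding pteq Cs_def h_def by simp
  define F where "F = (\<lambda>x. infsum (\<lambda>y. gs mu x y * f y) UNIV)"
  have F0: "F x \<ge> 0" for x unfolding F_def using gs_nonneg f0 by (intro infsum_nonneg) simp
  have Fle: "F x \<le> Cs * h x" for x using KB by (simp add: F_def)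
  have PF: "Pop mu F x + f x = F x" for x unfolding F_def by (rule Pop_potential) (use KB in blast)
  define w where "w = (\<lambda>x. l * h x + (2 * l) powr q * F x)"
  show ?thesis unfolding has_pos_solution_def
  proof (intro exI[of _ w] conjI allI)
    fix x
    have lq0: "(2 * l) powr q > 0" using l by simp
    show wpos: "w x > 0" using l hpos[of x] F0[of x] lq0 by (simp add: w_def add_pos_nonneg)
    have "(2 * l) powr q * F x \<le> (2 * l) powr q * (Cs * h x)" using Fle[of x] lq0 by (intro mult_left_mono) auto
    also have "\<dots> = l * h x" using lC by (simp add: mult.assoc[symmetric])
    finally have wle: "w x \<le> 2 * l * h x" by (simp add: w_def)
    have "Pop mu w x = l * Pop mu h x + (2 * l) powr q * Pop mu F x"
      unfolding w_def by (rule Pop_lin)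
    also have "\<dots> \<le> l * h x + (2 * l) powr q * (F x - f x)"
      using hsup[of x] l PF[of x] by (intro add_mono mult_left_mono) auto
    finally have "w x - Pop mu w x \<ge> (2 * l) powr q * f x" by (simp add: w_def algebra_simps)
    moreover have "\<sigma> x * w x powr q \<le> (2 * l) powr q * f x"
    proof -
      have "w x powr q \<le> (2 * l * h x) powr q" using wpos wle q by (intro powr_mono2) auto
      also have "\<dots> = (2 * l) powr q * h x powr q" using l hpos[of x] by (simp add: powr_mult)
      finally have "\<sigma> x * w x powr q \<le> \<sigma> x * ((2 * l) powr q * h x powr q)"
        using \<sigma>0[of x] by (intro mult_left_mono) auto
      then show ?thesis by (simp add: f_def algebra_simps)
    qed
    ultimately show "- laplacian mu w x \<ge> \<sigma> x * w x powr q" by (simp add: laplacian_eq)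
  qed
qed

end

theorem theorem1p5:
  fixes mu :: "'a \<Rightarrow> 'a \<Rightarrow> real" and \<sigma> :: "'a \<Rightarrow> real" and q :: real
  assumes "weighted_graph mu" and "infinite (UNIV :: 'a set)"
    and "connected_graph mu" and "locally_finite mu" and "non_parabolic mu"
    and "q > 1" and "\<forall>x. \<sigma> x \<ge> 0" and "\<exists>x. \<sigma> x \<noteq> 0"
  defines "\<nu> \<equiv> (\<lambda>y. \<sigma> y * vmeas mu y)"
  shows
    "(has_pos_solution mu \<sigma> q \<longrightarrow>
       (\<forall>p. \<sigma> p > 0 \<longrightarrow>
          (\<lambda>y. green mu p y powr q * \<nu> y) summable_on UNIV \<and>
          (\<exists>r0>0. \<exists>C>0. \<forall>r>r0. \<forall>x.
             (\<lambda>y. green mu x y * \<nu> y) summable_on {y. green mu p y > 1 / r} \<and>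
             (\<Sum>\<^sub>\<infinity>y\<in>{y. green mu p y > 1 / r}. green mu x y * \<nu> y) \<le> C * r powr (q - 1))))
     \<and>
     ((three_G mu \<and>
       (\<exists>p. (\<lambda>y. green mu p y powr q * \<nu> y) summable_on UNIV \<and>
          (\<exists>r0>0. \<exists>C>0. \<forall>r>r0. \<forall>x.
             (\<lambda>y. green mu x y * \<nu> y) summable_on {y. green mu p y > 1 / r} \<and>
             (\<Sum>\<^sub>\<infinity>y\<in>{y. green mu p y > 1 / r}. green mu x y * \<nu> y) \<le> C * r powr (q - 1))))
      \<longrightarrow> has_pos_solution mu \<sigma> q)"
proof -
  interpret wgn mu
    using assms(1-5) by unfold_locales auto
  have q: "q > 1" and \<sigma>0: "\<And>x. \<sigma> x \<ge> 0" using assms(6,7) by auto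
  show ?thesis
    unfolding assms(9)
  proof (intro conjI impI allI)
    fix p assume hs: "has_pos_solution mu \<sigma> q" and sp: "0 < \<sigma> p"
    show "(\<lambda>y. green mu p y powr q * (\<sigma> y * vmeas mu y)) summable_on UNIV"
      using forward[OF q \<sigma>0 hs sp] by blast
    show "\<exists>r0>0. \<exists>C>0. \<forall>r>r0. \<forall>x.
       (\<lambda>y. green mu x y * (\<sigma> y * vmeas mu y)) summable_on {y. green mu p y > 1 / r} \<and>
       (\<Sum>\<^sub>\<infinity>y\<in>{y. green mu p y > 1 / r}. green mu x y * (\<sigma> y * vmeas mu y)) \<le> C * r powr (q - 1)"
      using forward[OF q \<sigma>0 hs sp] by blast
  next
    assume H: "three_G mu \<and> (\<exists>p. (\<lambda>y. green mu p y powr q * (\<sigma> y * vmeas mu y)) summable_on UNIV \<and>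
          (\<exists>r0>0. \<exists>C>0. \<forall>r>r0. \<forall>x.
             (\<lambda>y. green mu x y * (\<sigma> y * vmeas mu y)) summable_on {y. green mu p y > 1 / r} \<and>
             (\<Sum>\<^sub>\<infinity>y\<in>{y. green mu p y > 1 / r}. green mu x y * (\<sigma> y * vmeas mu y)) \<le> C * r powr (q - 1)))"
    then obtain p where t3: "three_G mu"
      and si: "(\<lambda>y. green mu p y powr q * (\<sigma> y * vmeas mu y)) summable_on UNIV"
      and sii: "\<exists>r0>0. \<exists>C>0. \<forall>r>r0. \<forall>x.
             (\<lambda>y. green mu x y * (\<sigma> y * vmeas mu y)) summable_on {y. green mu p y > 1 / r} \<and>
             (\<Sum>\<^sub>\<infinity>y\<in>{y. green mu p y > 1 / r}. green mu x y * (\<sigma> y * vmeas mu y)) \<le> C * r powr (q - 1)"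
      by blast
    show "has_pos_solution mu \<sigma> q" by (rule converse[OF q \<sigma>0 t3 si sii])
  qed
qed

end
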